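(* For every real number $r\ge 1$, the function $f_r:[0,1]\to\mathbb{R}$ defined by $$f_r(x):=\sum_{m\in\mathbb{Z}}\Big|\frac{\sin(\pi(x+m))}{\pi(x+m)}\Big|^{2r},\qquad x\in[0,1],$$ attains its global minimum on $[0,1]$ at $x=\tfrac12$.
   Context: The summands have removable singularities (at $x+m=0$); each is understood to be its unique continuous extension (so the summand equals $1$ when $x+m=0$). *)

theory Defs
  imports "HOL-Analysis.Analysis"
begin

definition sinc_pi :: "real \<Rightarrow> real" where
  "sinc_pi t = (if t = 0 then 1 else sin (pi * t) / (pi * t))"

definition f_r :: "real \<Rightarrow> real \<Rightarrow> real" where
  "f_r r x = (\<Sum>\<^sub>\<infinity>m\<in>(UNIV::int set). \<bar>sinc_pi (x + of_int m)\<bar> powr (2 * r))"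

end

theory Submission
  imports Defs
begin



lemma Gamma_reflection_real:
  fixes x :: real
  assumes "x \<notin> \<int>"
  shows "Gamma x * Gamma (1 - x) = pi / sin (pi * x)"
proof -
  from Gamma_reflection_complex[of "complex_of_real x"]
  have "complex_of_real (Gamma x * Gamma (1 - x)) = complex_of_real (pi / sin (pi * x))"
    by (simp add: Gamma_complex_of_real[symmetric] sin_of_real[symmetric])
  thus ?thesis by (simp only: of_real_eq_iff)
qed

lemma lnG_refl:
  fixes x :: real
  assumes "0 < x" "x < 1"
  shows "ln_Gamma x + ln_Gamma (1 - x) - ln pi + ln (sin (pi * x)) = 0"
proof -
  have nz: "x \<notin> \<int>"
    using assms by (metis Ints_cases not_less of_int_0_less_iff of_int_less_1_iff int_one_le_iff_zero_less less_le_trans)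
  have s: "sin (pi * x) > 0" using assms by (intro sin_gt_zero) auto
  have g1: "Gamma x > 0" "Gamma (1-x) > 0" using assms by auto
  have "ln_Gamma x + ln_Gamma (1 - x) = ln (Gamma x) + ln (Gamma (1 - x))"
    using assms by (simp add: ln_Gamma_real_pos)
  also have "\<dots> = ln (Gamma x * Gamma (1 - x))"
    using g1 by (simp add: ln_mult)
  also have "\<dots> = ln pi - ln (sin (pi * x))"
    using Gamma_reflection_real[OF nz] s by (simp add: ln_div)
  finally show ?thesis by simp
qed

lemma digamma_refl:
  fixes x :: real
  assumes "0 < x" "x < 1"
  shows "Digamma x - Digamma (1 - x) + pi * cos (pi * x) / sin (pi * x) = 0"
proof -
  define F where "F = (\<lambda>y::real. ln_Gamma y + ln_Gamma (1 - y) - ln pi + ln (sin (pi * y)))"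
  have s: "sin (pi * x) > 0" using assms by (intro sin_gt_zero) auto
  have "(F has_real_derivative (Digamma x - Digamma (1 - x) + pi * cos (pi * x) / sin (pi * x))) (at x)"
    unfolding F_def using assms s
    by (auto intro!: derivative_eq_intros simp: field_simps)
  moreover have "\<forall>y. \<bar>x - y\<bar> < min x (1 - x) \<longrightarrow> F x = F y"
    unfolding F_def using lnG_refl assms by (smt (verit, best))
  ultimately show ?thesis
    by (intro DERIV_local_const[where d="min x (1-x)"]) (use assms in auto)
qed

lemma trigamma_refl:
  fixes x :: real
  assumes "0 < x" "x < 1"
  shows "Polygamma 1 x + Polygamma 1 (1 - x) = pi^2 / sin (pi * x)^2"
proof -
  define F where "F = (\<lambda>y::real. Digamma y - Digamma (1 - y) + pi * cos (pi * y) / sin (pi * y))"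
  have s: "sin (pi * x) > 0" using assms by (intro sin_gt_zero) auto
  have np: "x \<notin> \<int>\<^sub>\<le>\<^sub>0" "1 - x \<notin> \<int>\<^sub>\<le>\<^sub>0" using assms nonpos_Ints_nonpos by force+
  have "(F has_real_derivative (Polygamma 1 x + Polygamma 1 (1 - x) - pi^2 / sin (pi * x)^2)) (at x)"
    unfolding F_def using assms s np
    apply (auto intro!: derivative_eq_intros simp: field_simps)
    using sin_cos_squared_add[of "pi*x"] apply algebra
    done
  moreover have "\<forall>y. \<bar>x - y\<bar> < min x (1 - x) \<longrightarrow> F x = F y"
    unfolding F_def using digamma_refl assms by (smt (verit, best))
  ultimately have "Polygamma 1 x + Polygamma 1 (1 - x) - pi^2 / sin (pi * x)^2 = 0"
    by (intro DERIV_local_const[where d="min x (1-x)"]) (use assms in auto)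
  thus ?thesis by simp
qed



lemma trigamma_sums:
  fixes x :: real assumes "x > 0"
  shows "(\<lambda>k. 1 / (real k + x)^2) sums Polygamma 1 x"
proof -
  have "summable (\<lambda>k. inverse ((x + of_nat k)^2))"
    using Polygamma_converges'[of x 2] assms by simp
  hence "(\<lambda>k. inverse ((x + of_nat k)^2)) sums (\<Sum>k. inverse ((x + of_nat k)^2))"
    by (rule summable_sums)
  moreover have "Polygamma 1 x = (\<Sum>k. inverse ((x + of_nat k)^2))"
    by (simp add: Polygamma_def power2_eq_square)
  ultimately have "(\<lambda>k. inverse ((x + of_nat k)^2)) sums Polygamma 1 x" by simp
  thus ?thesis by (simp add: field_simps inverse_eq_divide)
qed

definition hh :: "real \<Rightarrow> nat \<Rightarrow> real" where
  "hh x j = 1 / (real j + x)^2 + 1 / (real j + 1 - x)^2"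

lemma hh_sums:
  fixes x :: real assumes "0 < x" "x < 1"
  shows "hh x sums (pi^2 / sin (pi * x)^2)"
proof -
  have "(\<lambda>k. 1 / (real k + x)^2 + 1 / (real k + (1 - x))^2) sums (Polygamma 1 x + Polygamma 1 (1 - x))"
    by (intro sums_add trigamma_sums) (use assms in auto)
  thus ?thesis using trigamma_refl[OF assms] unfolding hh_def by (simp add: algebra_simps)
qed

lemma cos_bound: fixes t :: real assumes "\<bar>t\<bar> \<le> 1/2"
  shows "cos (pi * t) \<le> 1 - 4/3 * t^2"
proof -
  define y where "y = pi * t"
  obtain u where u: "cos y = (\<Sum>m<4. cos_coeff m * y ^ m) + (cos(u + 1/2 * real 4 * pi) / fact 4) * y ^ 4"
    using Maclaurin_cos_expansion by blast
  have c: "cos_coeff 0 = 1" "cos_coeff 1 = 0" "cos_coeff 2 = -1/2" "cos_coeff 3 = 0"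
    by (simp_all add: cos_coeff_def)
  have s: "(\<Sum>m<4. cos_coeff m * y ^ m) = cos_coeff 0 * y^0 + cos_coeff 1 * y^1 + cos_coeff 2 * y^2 + cos_coeff 3 * y^3"
    by (simp add: lessThan_nat_numeral)
  have cu: "cos(u + 1/2 * real 4 * pi) = cos u"
  proof -
    have "1/2 * real 4 * pi = 2*pi" by simp
    thus ?thesis by (simp only: cos_periodic)
  qed
  have f4: "(fact 4 :: real) = 24" by (simp add: fact_numeral)
  have e: "cos y = 1 - y^2/2 + cos u / 24 * y^4"
    using u unfolding s c cu f4 by simp
  have "cos u / 24 * y^4 \<le> 1/24 * y^4"
    by (intro mult_right_mono) auto
  moreover have "\<bar>y\<bar> \<le> 2" 
  proof -
    have "\<bar>y\<bar> = pi * \<bar>t\<bar>" unfolding y_def by (simp add: abs_mult)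
    also have "\<dots> \<le> 4 * (1/2)" using assms pi_less_4 pi_gt_zero
      by (intro mult_mono) auto
    finally show ?thesis by simp
  qed
  hence "y^2 \<le> 4" by (metis abs_le_square_iff abs_numeral power2_eq_square real_sqrt_four real_sqrt_pow2 zero_le_numeral) 
  moreover have "y^2 \<ge> 4 * t^2"
  proof -
    have "y^2 = pi^2 * t^2" unfolding y_def by (simp add: power_mult_distrib)
    moreover have "pi^2 \<ge> 2^2" using pi_ge_two by (intro power_mono) auto
    ultimately show ?thesis by (simp add: mult_right_mono)
  qed
  moreover have "y^4 = y^2 * y^2" by (simp add: power2_eq_square power4_eq_xxxx)
  ultimately have "cos y \<le> 1 - y^2/2 + y^2 * y^2 / 24" using e by linarith
  also have "\<dots> \<le> 1 - y^2/3"
  proof -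
    have "y^2*y^2 \<le> 4*y^2" using \<open>y^2 \<le> 4\<close> by (intro mult_right_mono) auto
    thus ?thesis by linarith
  qed
  also have "\<dots> \<le> 1 - 4/3 * t^2" using \<open>y^2 \<ge> 4 * t^2\<close> by simp
  finally show ?thesis unfolding y_def .
qed
lemma alg: fixes c t q :: real assumes "c \<ge> 3/2" "\<bar>t\<bar> < 1/2" "0 \<le> q" "q \<le> 1 - 3*t^2/c^2"
  shows "q * (1/(c+t)^2 + 1/(c-t)^2) \<le> 2/c^2"
proof -
  have cp: "c + t > 0" "c - t > 0" "c > 0" using assms by auto
  define u where "u = 1/(c+t)^2 + 1/(c-t)^2"
  define P where "P = (c+t)*(c-t)"
  have Pp: "P > 0" unfolding P_def using cp by simp
  have u0: "u \<ge> 0" unfolding u_def by simp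
  have P2: "P^2 = (c+t)^2*(c-t)^2" unfolding P_def by (simp add: power_mult_distrib)
  have "u * P^2 = (c-t)^2 + (c+t)^2" unfolding u_def P2 using cp by (simp add: field_simps)
  hence uP: "u * P^2 = 2*c^2 + 2*t^2" by (simp add: power2_eq_square algebra_simps)
  have key: "(c^2 - 3*t^2) * (2*c^2 + 2*t^2) \<le> 2 * P^2"
  proof -
    have "2 * P^2 - (c^2 - 3*t^2) * (2*c^2 + 2*t^2) = 8 * t^4" unfolding P_def by algebra
    moreover have "t^4 \<ge> 0" by simp
    ultimately show ?thesis by linarith
  qed
  have "(c^2 - 3*t^2) * u * P^2 \<le> 2 * P^2" using key uP by (simp add: mult.assoc)
  hence k2: "(c^2 - 3*t^2) * u \<le> 2" using Pp by simp
  have "q * u \<le> (1 - 3*t^2/c^2) * u" using assms u0 by (intro mult_right_mono) auto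
  also have "1 - 3*t^2/c^2 = (c^2 - 3*t^2)/c^2" using cp by (simp add: field_simps)
  also have "(c^2 - 3*t^2)/c^2 * u = ((c^2 - 3*t^2) * u) / c^2" by simp
  also have "\<dots> \<le> 2 / c^2" using k2 by (intro divide_right_mono) auto
  finally show ?thesis unfolding u_def .
qed

lemma hh_bound:
  fixes x :: real assumes "j \<ge> 1" "0 < x" "x < 1"
  shows "sin (pi * x)^2 * hh x j \<le> hh (1/2) j"
proof -
  define t where "t = x - 1/2"
  define c where "c = real j + 1/2"
  have c32: "c \<ge> 3/2" using assms unfolding c_def by simp
  have tb: "\<bar>t\<bar> < 1/2" using assms unfolding t_def by (simp add: abs_if)
  have "pi*x = pi*t + pi/2" by (simp add: t_def algebra_simps)
  hence sc: "sin (pi*x) = cos (pi*t)" by (simp add: sin_add)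
  have co0: "cos (pi*t) \<ge> 0"
  proof (rule cos_ge_zero)
    have "t \<le> 1/2" "-(1/2) \<le> t" using tb by auto
    hence "pi * t \<le> pi * (1/2)" "pi * (-(1/2)) \<le> pi * t" by (intro mult_left_mono; simp)+
    thus "- (pi / 2) \<le> pi * t" "pi * t \<le> pi / 2" by auto
  qed
  have "sin (pi*x)^2 \<le> cos (pi*t)" unfolding sc power2_eq_square
    using co0 by (simp add: mult_left_le)
  also have "\<dots> \<le> 1 - 4/3 * t^2" using cos_bound tb by simp
  also have "\<dots> \<le> 1 - 3*t^2/c^2"
  proof -
    have "c^2 \<ge> (3/2)^2" using c32 by (intro power_mono) auto
    hence "4/3*t^2*(3/2)^2 \<le> 4/3*t^2 * c^2" by (intro mult_left_mono) simp_all
    hence "3*t^2 \<le> 4/3*t^2 * c^2" by (simp add: power2_eq_square)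
    hence "3*t^2/c^2 \<le> 4/3*t^2" using c32 by (simp add: divide_le_eq)
    thus ?thesis by simp
  qed
  finally have q: "sin (pi*x)^2 \<le> 1 - 3*t^2/c^2" .
  have "sin (pi*x)^2 * (1/(c+t)^2 + 1/(c-t)^2) \<le> 2/c^2"
    by (rule alg[OF c32 tb _ q]) simp
  moreover have "hh x j = 1/(c+t)^2 + 1/(c-t)^2" unfolding hh_def c_def t_def by (simp add: algebra_simps)
  moreover have "hh (1/2) j = 2/c^2" unfolding hh_def c_def by (simp add: algebra_simps)
  ultimately show ?thesis by simp
qed




definition dd :: "real \<Rightarrow> nat \<Rightarrow> real" where
  "dd x k = (if even k then real (k div 2) + x else real (k div 2) + 1 - x)"
definition aa :: "real \<Rightarrow> nat \<Rightarrow> real" where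
  "aa x k = sin (pi * x)^2 / (pi^2 * (dd x k)^2)"
definition DD :: "real \<Rightarrow> nat \<Rightarrow> real" where
  "DD x j = sin (pi * x)^2 * hh x j - hh (1/2) j"

lemma sum_even_split: "(\<Sum>k<2*n. f k) = (\<Sum>j<n. f (2*j) + f (2*j+1))" for f :: "nat \<Rightarrow> real"
  by (induction n) (auto simp: algebra_simps)

lemma aa_pair: "aa x (2*j) + aa x (2*j+1) = sin (pi*x)^2 * hh x j / pi^2"
  unfolding aa_def dd_def hh_def by (simp add: field_simps)

lemma DD_sums: assumes "0 < x" "x < 1" shows "DD x sums 0"
proof -
  have s: "sin (pi*x) \<noteq> 0" using assms sin_gt_zero[of "pi*x"] by auto
  have "(\<lambda>j. sin (pi*x)^2 * hh x j - hh (1/2) j) sums (sin (pi*x)^2 * (pi^2 / sin (pi * x)^2) - pi^2 / sin (pi * (1/2))^2)"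
    by (intro sums_diff sums_mult hh_sums) (use assms in auto)
  thus ?thesis using s unfolding DD_def by simp
qed

lemma DD_nonpos: assumes "j \<ge> 1" "0 < x" "x < 1" shows "DD x j \<le> 0"
  using hh_bound[OF assms] unfolding DD_def by simp

lemma DD_partial: assumes "0 < x" "x < 1" shows "(\<Sum>j<n. DD x j) \<ge> 0"
proof (cases "n = 0")
  case False
  have sm: "summable (DD x)" using DD_sums[OF assms] sums_summable by blast
  have "0 = suminf (DD x)" using DD_sums[OF assms] sums_unique by blast
  also have "\<dots> = (\<Sum>i. DD x (i + n)) + (\<Sum>j<n. DD x j)"
    by (rule suminf_split_initial_segment[OF sm])
  finally have e: "0 = (\<Sum>i. DD x (i + n)) + (\<Sum>j<n. DD x j)" .
  have "(\<Sum>i. DD x (i + n)) \<le> (\<Sum>i. (0::real))"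
    by (intro suminf_le summable_ignore_initial_segment[OF sm])
       (use False DD_nonpos[OF _ assms] in auto)
  thus ?thesis using e by simp
qed simp

lemma aa_half: "aa (1/2) k = 1 / (pi^2 * (real (k div 2) + 1/2)^2)"
  unfolding aa_def dd_def by auto

lemma A_partial:
  assumes "0 < x" "x \<le> 1/2"
  shows "(\<Sum>k<N. aa x k - aa (1/2) k) \<ge> 0"
proof -
  have x1: "x < 1" using assms by simp
  have pp: "pi^2 > 0" by simp
  have even: "(\<Sum>k<2*n. aa x k - aa (1/2) k) = (\<Sum>j<n. DD x j) / pi^2" for n
  proof -
    have "(\<Sum>k<2*n. aa x k - aa (1/2) k) = (\<Sum>j<n. (aa x (2*j) + aa x (2*j+1)) - (aa (1/2) (2*j) + aa (1/2) (2*j+1)))"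
      by (subst sum_even_split) (simp add: algebra_simps)
    also have "\<dots> = (\<Sum>j<n. DD x j / pi^2)"
      unfolding aa_pair DD_def by (intro sum.cong refl) (simp add: diff_divide_distrib)
    finally show ?thesis by (simp add: sum_divide_distrib)
  qed
  show ?thesis
  proof (cases "even N")
    case True
    then obtain n where "N = 2*n" by blast
    thus ?thesis using even[of n] DD_partial[OF assms(1) x1, of n] by simp
  next
    case False
    then obtain n where N: "N = 2*n+1" using oddE by blast
    let ?s = "sin (pi*x)^2"
    have s1: "?s \<le> 1" by (simp add: abs_sin_le_one abs_square_le_1)
    have s0: "?s \<ge> 0" by simp
    have "(\<Sum>k<N. aa x k - aa (1/2) k) = (\<Sum>j<n. DD x j) / pi^2 + (aa x (2*n) - aa (1/2) (2*n))"
      unfolding N using even[of n] by simp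
    also have "aa x (2*n) - aa (1/2) (2*n) = (?s / (real n + x)^2 - 1 / (real n + 1/2)^2) / pi^2"
      unfolding aa_def dd_def by (simp add: field_simps)
    finally have e: "(\<Sum>k<N. aa x k - aa (1/2) k) = ((\<Sum>j<n. DD x j) + ?s / (real n + x)^2 - 1 / (real n + 1/2)^2) / pi^2"
      by (simp add: add_divide_distrib diff_divide_distrib)
    have "(\<Sum>j<Suc n. DD x j) \<ge> 0" by (rule DD_partial[OF assms(1) x1])
    hence g1: "(\<Sum>j<n. DD x j) \<ge> - DD x n" by simp
    have "- DD x n + ?s / (real n + x)^2 - 1 / (real n + 1/2)^2 = 1 / (real n + 1/2)^2 - ?s / (real n + 1 - x)^2"
      unfolding DD_def hh_def by (simp add: field_simps)
    also have "\<dots> \<ge> 0"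
    proof -
      have "?s / (real n + 1 - x)^2 \<le> 1 / (real n + 1 - x)^2"
        using s1 by (intro divide_right_mono) auto
      also have "\<dots> \<le> 1 / (real n + 1/2)^2"
        using assms by (intro divide_left_mono power_mono mult_pos_pos) auto
      finally show ?thesis by simp
    qed
    finally have "(\<Sum>j<n. DD x j) + ?s / (real n + x)^2 - 1 / (real n + 1/2)^2 \<ge> 0"
      using g1 by linarith
    thus ?thesis unfolding e by simp
  qed
qed




lemma tangent_powr:
  fixes a b r :: real assumes "a > 0" "b > 0" "r \<ge> 1"
  shows "a powr r - b powr r \<ge> r * b powr (r - 1) * (a - b)"
proof -
  have "(\<lambda>y. r * y powr (r - 1)) b * (a - b) \<le> (\<lambda>y. y powr r) a - (\<lambda>y. y powr r) b"
  proof (rule f''_imp_f'[where C="{0<..}" and f''="\<lambda>y. r * (r - 1) * y powr (r - 2)"])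
    show "convex {0::real<..}" by simp
    show "\<And>y. y \<in> {0<..} \<Longrightarrow> ((\<lambda>y. y powr r) has_real_derivative r * y powr (r - 1)) (at y)"
      by (auto intro!: derivative_eq_intros)
    show "\<And>y. y \<in> {0<..} \<Longrightarrow> ((\<lambda>y. r * y powr (r - 1)) has_real_derivative r * (r - 1) * y powr (r - 2)) (at y)"
      by (auto intro!: derivative_eq_intros simp: algebra_simps)
    show "\<And>y. y \<in> {0<..} \<Longrightarrow> 0 \<le> r * (r - 1) * y powr (r - 2)"
      using assms by auto
  qed (use assms in auto)
  thus ?thesis by simp
qed

lemma abel_nonneg:
  fixes w c :: "nat \<Rightarrow> real"
  assumes w: "\<And>k. w (Suc k) \<le> w k" "\<And>k. w k \<ge> 0"
    and c: "\<And>N. (\<Sum>k<N. c k) \<ge> 0"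
  shows "(\<Sum>k<N. w k * c k) \<ge> 0"
proof -
  have id: "(\<Sum>k<N. w k * c k) = w N * (\<Sum>k<N. c k) + (\<Sum>k<N. (w k - w (Suc k)) * (\<Sum>i<Suc k. c i))"
    by (induction N) (auto simp: algebra_simps)
  have "w N * (\<Sum>k<N. c k) \<ge> 0" using w c by simp
  moreover have "(\<Sum>k<N. (w k - w (Suc k)) * (\<Sum>i<Suc k. c i)) \<ge> 0"
  proof (rule sum_nonneg)
    fix k show "0 \<le> (w k - w (Suc k)) * (\<Sum>i<Suc k. c i)"
      using w(1)[of k] c[of "Suc k"] by simp
  qed
  ultimately show ?thesis unfolding id by linarith
qed

lemma aa_pos: assumes "0 < x" "x < 1" shows "aa x k > 0"
proof -
  have "sin (pi*x) > 0" using assms by (intro sin_gt_zero) auto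
  moreover have "dd x k > 0" using assms unfolding dd_def by auto
  ultimately show ?thesis unfolding aa_def by simp
qed

lemma partial_powr:
  assumes "0 < x" "x \<le> 1/2" "r \<ge> 1"
  shows "(\<Sum>k<N. aa (1/2) k powr r) \<le> (\<Sum>k<N. aa x k powr r)"
proof -
  define w where "w k = aa (1/2) k powr (r - 1)" for k
  have bpos: "aa (1/2) k > 0" for k by (rule aa_pos) auto
  have apos: "aa x k > 0" for k by (rule aa_pos) (use assms in auto)
  have mono: "aa (1/2) (Suc k) \<le> aa (1/2) k" for k
    unfolding aa_half
    by (intro divide_left_mono mult_left_mono power_mono mult_pos_pos) (auto simp: div_le_mono)
  have wm: "w (Suc k) \<le> w k" for k unfolding w_def
    using mono[of k] bpos[of "Suc k"] assms(3) by (intro powr_mono2) auto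
  have "0 \<le> (\<Sum>k<N. w k * (aa x k - aa (1/2) k))"
    by (rule abel_nonneg[where w=w and c="\<lambda>k. aa x k - aa (1/2) k"])
       (use wm A_partial[OF assms(1,2)] in \<open>auto simp: w_def\<close>)
  also have "\<dots> \<le> (\<Sum>k<N. (aa x k powr r - aa (1/2) k powr r) / r)"
  proof (intro sum_mono)
    fix k
    have "r * w k * (aa x k - aa (1/2) k) \<le> aa x k powr r - aa (1/2) k powr r"
      unfolding w_def by (rule tangent_powr[OF apos bpos assms(3)])
    thus "w k * (aa x k - aa (1/2) k) \<le> (aa x k powr r - aa (1/2) k powr r) / r"
      using assms(3) by (simp add: field_simps)
  qed
  also have "\<dots> = ((\<Sum>k<N. aa x k powr r) - (\<Sum>k<N. aa (1/2) k powr r)) / r"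
    by (simp only: sum_divide_distrib[symmetric] sum_subtractf)
  finally have "0 \<le> ((\<Sum>k<N. aa x k powr r) - (\<Sum>k<N. aa (1/2) k powr r)) / r" .
  hence "0 \<le> (\<Sum>k<N. aa x k powr r) - (\<Sum>k<N. aa (1/2) k powr r)"
    using assms(3) by (simp add: zero_le_divide_iff)
  thus ?thesis by simp
qed




definition ee :: "nat \<Rightarrow> int" where
  "ee k = (if even k then int (k div 2) else - int (k div 2) - 1)"

lemma bij_ee: "bij_betw ee UNIV UNIV"
proof (rule bij_betw_byWitness[where f'="\<lambda>m. if m \<ge> 0 then 2 * nat m else 2 * nat (-m-1) + 1"])
  show "\<forall>a\<in>UNIV. (if ee a \<ge> 0 then 2 * nat (ee a) else 2 * nat (- ee a - 1) + 1) = a"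
    unfolding ee_def by (auto elim: oddE)
  show "\<forall>a'\<in>UNIV. ee (if a' \<ge> 0 then 2 * nat a' else 2 * nat (- a' - 1) + 1) = a'"
    unfolding ee_def by auto
qed auto

lemma sin_shift_sq: "sin (z + of_int m * pi)^2 = sin z ^ 2"
proof -
  have s0: "sin (of_int m * pi) = 0" by (simp add: sin_times_pi_eq_0)
  hence "cos (of_int m * pi)^2 = 1" using sin_cos_squared_add[of "of_int m * pi"] by simp
  thus ?thesis using s0 by (simp add: sin_add power_mult_distrib)
qed

lemma ee_dd: "x + of_int (ee k) = (if even k then dd x k else - dd x k)"
  unfolding ee_def dd_def by auto

lemma sinc_term:
  assumes "0 < x" "x < 1"
  shows "\<bar>sinc_pi (x + of_int (ee k))\<bar> powr (2 * r) = aa x k powr r"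
proof -
  define y where "y = x + of_int (ee k)"
  have dpos: "dd x k > 0" using assms unfolding dd_def by auto
  have ya: "y^2 = (dd x k)^2" unfolding y_def ee_dd by auto
  have yn: "y \<noteq> 0" using ya dpos by auto
  have "sin (pi * y)^2 = sin (pi * x)^2"
    unfolding y_def using sin_shift_sq[of "pi * x" "ee k"] by (simp add: algebra_simps)
  hence sq: "sinc_pi y ^ 2 = aa x k"
    unfolding sinc_pi_def aa_def using yn ya by (simp add: power_divide power_mult_distrib)
  have "\<bar>sinc_pi y\<bar> powr (2 * r) = (\<bar>sinc_pi y\<bar> powr 2) powr r" by (simp only: powr_powr)
  also have "\<bar>sinc_pi y\<bar> powr 2 = sinc_pi y ^ 2" by simp
  finally show ?thesis unfolding y_def[symmetric] sq .
qed

lemma aa_partial_le1: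
  assumes "0 < x" "x < 1"
  shows "(\<Sum>k<N. aa x k) \<le> 1"
proof -
  have s: "sin (pi*x) > 0" using assms by (intro sin_gt_zero) auto
  have hn: "hh x j \<ge> 0" for j unfolding hh_def by simp
  have "(\<Sum>k<N. aa x k) \<le> (\<Sum>k<2*N. aa x k)"
    using aa_pos[OF assms] by (intro sum_mono2) (auto simp: less_imp_le)
  also have "\<dots> = (\<Sum>j<N. sin (pi*x)^2 * hh x j / pi^2)"
    by (simp only: sum_even_split aa_pair)
  also have "\<dots> = sin (pi*x)^2 / pi^2 * (\<Sum>j<N. hh x j)"
    by (simp add: sum_distrib_left)
  also have "(\<Sum>j<N. hh x j) \<le> pi^2 / sin (pi*x)^2"
    using sum_le_suminf[of "hh x" "{..<N}"] hh_sums[OF assms] hn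
    by (auto simp: sums_iff)
  hence "sin (pi*x)^2 / pi^2 * (\<Sum>j<N. hh x j) \<le> sin (pi*x)^2 / pi^2 * (pi^2 / sin (pi*x)^2)"
    by (intro mult_left_mono) auto
  also have "\<dots> = 1" using s by simp
  finally show ?thesis by simp
qed

lemma aa_summable: assumes "0 < x" "x < 1" shows "summable (aa x)"
  using aa_partial_le1[OF assms] aa_pos[OF assms]
  by (intro summableI_nonneg_bounded[where x=1]) (auto simp: less_imp_le)

lemma aa_le1: assumes "0 < x" "x < 1" shows "aa x k \<le> 1"
proof -
  have "aa x k \<le> (\<Sum>i<Suc k. aa x i)"
    using aa_pos[OF assms] by (intro member_le_sum) (auto simp: less_imp_le)
  also have "\<dots> \<le> 1" by (rule aa_partial_le1[OF assms])
  finally show ?thesis .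
qed

lemma aapow_summable: assumes "0 < x" "x < 1" "r \<ge> 1" shows "summable (\<lambda>k. aa x k powr r)"
proof (rule summable_comparison_test[OF _ aa_summable[OF assms(1,2)]])
  show "\<exists>N. \<forall>n\<ge>N. norm (aa x n powr r) \<le> aa x n"
    using aa_pos[OF assms(1,2)] aa_le1[OF assms(1,2)] assms(3)
    by (auto intro!: powr_le_one_le)
qed

lemma f_r_repr:
  assumes "0 < x" "x < 1" "r \<ge> 1"
  shows "f_r r x = (\<Sum>k. aa x k powr r)"
proof -
  have "f_r r x = infsum (\<lambda>k. \<bar>sinc_pi (x + of_int (ee k))\<bar> powr (2 * r)) UNIV"
    unfolding f_r_def by (rule infsum_reindex_bij_betw[OF bij_ee, symmetric])
  also have "\<dots> = infsum (\<lambda>k. aa x k powr r) UNIV"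
    using sinc_term[OF assms(1,2)] by simp
  also have "\<dots> = (\<Sum>k. aa x k powr r)"
  proof -
    have "(\<lambda>k. aa x k powr r) summable_on UNIV"
      using aapow_summable[OF assms] by (subst summable_on_UNIV_nonneg_real_iff) auto
    hence "(\<lambda>k. aa x k powr r) sums infsum (\<lambda>k. aa x k powr r) UNIV"
      by (intro has_sum_imp_sums has_sum_infsum)
    thus ?thesis by (simp add: sums_iff)
  qed
  finally show ?thesis .
qed

lemma f_r_zero: "f_r r 0 = 1"
proof -
  have "f_r r 0 = infsum (\<lambda>m::int. \<bar>sinc_pi (0 + of_int m)\<bar> powr (2 * r)) {0}"
    unfolding f_r_def
  proof (rule infsum_cong_neutral)
    fix m :: int assume "m \<in> UNIV - {0}"
    hence "m \<noteq> 0" by simp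
    moreover have "sin (pi * of_int m) = 0" using sin_times_pi_eq_0[of "of_int m"] by (simp add: mult.commute)
    ultimately show "\<bar>sinc_pi (0 + of_int m)\<bar> powr (2 * r) = 0" by (simp add: sinc_pi_def)
  qed auto
  also have "\<dots> = 1" by (simp add: sinc_pi_def)
  finally show ?thesis .
qed

lemma sinc_pi_neg: "sinc_pi (- y) = sinc_pi y"
  unfolding sinc_pi_def by auto

lemma f_r_sym: "f_r r (1 - x) = f_r r x"
proof -
  have b: "bij_betw (\<lambda>m::int. -1 - m) UNIV UNIV"
    by (rule bij_betw_byWitness[where f'="\<lambda>m. -1 - m"]) auto
  have "f_r r x = infsum (\<lambda>m. \<bar>sinc_pi (x + of_int (-1 - m))\<bar> powr (2 * r)) UNIV"
    unfolding f_r_def by (rule infsum_reindex_bij_betw[OF b, symmetric])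
  also have "\<dots> = f_r r (1 - x)"
    unfolding f_r_def
  proof (rule infsum_cong)
    fix m :: int
    have "x + of_int (-1 - m) = - (1 - x + of_int m)" by simp
    thus "\<bar>sinc_pi (x + of_int (-1 - m))\<bar> powr (2 * r) = \<bar>sinc_pi (1 - x + of_int m)\<bar> powr (2 * r)"
      by (simp only: sinc_pi_neg)
  qed
  finally show ?thesis by simp
qed




lemma main_half:
  assumes "0 < x" "x \<le> 1/2" "r \<ge> 1"
  shows "f_r r (1/2) \<le> f_r r x"
proof -
  have x1: "x < 1" using assms by simp
  have "(\<Sum>k. aa (1/2) k powr r) \<le> (\<Sum>k. aa x k powr r)"
  proof (rule LIMSEQ_le)
    show "(\<lambda>n. \<Sum>k<n. aa (1/2) k powr r) \<longlonglongrightarrow> (\<Sum>k. aa (1/2) k powr r)"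
      by (rule summable_LIMSEQ, rule aapow_summable) (use assms in auto)
    show "(\<lambda>n. \<Sum>k<n. aa x k powr r) \<longlonglongrightarrow> (\<Sum>k. aa x k powr r)"
      by (rule summable_LIMSEQ, rule aapow_summable) (use assms x1 in auto)
    show "\<exists>N. \<forall>n\<ge>N. (\<Sum>k<n. aa (1/2) k powr r) \<le> (\<Sum>k<n. aa x k powr r)"
      using partial_powr[OF assms] by blast
  qed
  thus ?thesis using f_r_repr[OF assms(1) x1 assms(3)] f_r_repr[of "1/2" r] assms(3) by simp
qed

lemma half_le1:
  assumes "r \<ge> 1" shows "f_r r (1/2) \<le> 1"
proof -
  have h: "0 < (1/2::real)" "(1/2::real) < 1" by auto
  have "(\<Sum>k. aa (1/2) k powr r) \<le> 1"
  proof (rule suminf_le_const[OF aapow_summable[OF h assms]])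
    fix n
    have "(\<Sum>k<n. aa (1/2) k powr r) \<le> (\<Sum>k<n. aa (1/2) k)"
      using aa_pos[OF h] aa_le1[OF h] assms by (intro sum_mono powr_le_one_le) auto
    also have "\<dots> \<le> 1" by (rule aa_partial_le1[OF h])
    finally show "(\<Sum>k<n. aa (1/2) k powr r) \<le> 1" .
  qed
  thus ?thesis using f_r_repr[OF h assms] by simp
qed

theorem proposition2:
  fixes r :: real
  assumes "r \<ge> 1"
  shows "\<forall>x\<in>{0..1}. f_r r (1/2) \<le> f_r r x"
proof
  fix x :: real assume x: "x \<in> {0..1}"
  show "f_r r (1/2) \<le> f_r r x"
  proof (cases "x = 0 \<or> x = 1")
    case True
    have "f_r r 1 = 1" using f_r_sym[of r 0] f_r_zero[of r] by simp
    thus ?thesis using True f_r_zero[of r] half_le1[OF assms] by auto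
  next
    case False
    hence x01: "0 < x" "x < 1" using x by auto
    show ?thesis
    proof (cases "x \<le> 1/2")
      case True thus ?thesis using main_half x01 assms by blast
    next
      case False
      have "f_r r (1/2) \<le> f_r r (1 - x)" by (rule main_half) (use False x01 assms in auto)
      also have "f_r r (1 - x) = f_r r x" using f_r_sym[of r "1 - x"] by simp
      finally show ?thesis .
    qed
  qed
qed


end
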